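(* Let $\mathcal{B}$ be a $\sigma$-algebra on a nonempty set $E$ and let $\nu,\tau$ be $\sigma$-maxitive measures on $\mathcal{B}$, with $\tau$ $\sigma$-principal. Then $\nu\ll\tau$ if and only if $\nu\lll\tau$. In this situation, the relative density of $\nu$ with respect to $\tau$ is unique $\tau$-almost everywhere.
   Context: A $\sigma$-maxitive measure on $\mathcal{B}$ is a map $\nu:\mathcal{B}\to[0,\infty]$ with $\nu(\emptyset)=0$, $\nu(B\cup B')=\max(\nu(B),\nu(B'))$, and $\nu(\bigcup_nB_n)=\lim_n\nu(B_n)$ for nondecreasing sequences in $\mathcal{B}$. A subset $N\subset E$ is $\tau$-negligible if $N\subset G$ for some $G\in\mathcal{B}$ with $\tau(G)=0$; a property holds $\tau$-almost everywhere if it holds outside a $\tau$-negligible set. A $\sigma$-ideal of $\mathcal{B}$ is a nonempty $\mathcal{I}\subset\mathcal{B}$ closed under countable unions and such that $B\subset I\in\mathcal{I}$, $B\in\mathcal{B}$ imply $B\in\mathcal{I}$. $\tau$ is $\sigma$-principal if for every $\sigma$-ideal $\mathcal{I}$ of $\mathcal{B}$ there is $L\in\mathcal{I}$ such that $S\setminus L$ is $\tau$-negligible for all $S\in\mathcal{I}$. A map $f:E\to[0,\infty]$ is $\mathcal{B}$-measurable if $\{f>t\}\in\mathcal{B}$ for all $t\geq0$; its $\tau$-essential supremum on $B$ is $\bigoplus^{\tau}_{x\in B}f(x)=\inf\{t>0:B\cap\{f>t\}\text{ is }\tau\text{-negligible}\}$. We write $\nu\ll\tau$ if $\tau(B)=0\Rightarrow\nu(B)=0$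 for all $B\in\mathcal{B}$, and $\nu\lll\tau$ if there is a $\mathcal{B}$-measurable $f$ (a relative density of $\nu$ w.r.t. $\tau$) with $\nu(B)=\bigoplus^{\tau}_{x\in B}f(x)$ for all $B\in\mathcal{B}$. *)

theory Defs
  imports "HOL-Analysis.Analysis"
begin

definition sigma_maxitive :: "'a set set \<Rightarrow> ('a set \<Rightarrow> ennreal) \<Rightarrow> bool" where
  "sigma_maxitive B \<nu> \<longleftrightarrow>
     \<nu> {} = 0 \<and>
     (\<forall>A\<in>B. \<forall>A'\<in>B. \<nu> (A \<union> A') = max (\<nu> A) (\<nu> A')) \<and>
     (\<forall>S::nat \<Rightarrow> 'a set. range S \<subseteq> B \<longrightarrow> incseq S \<longrightarrow>
        (\<lambda>n. \<nu> (S n)) \<longlonglongrightarrow> \<nu> (\<Union>n. S n))"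

definition negligible :: "'a set set \<Rightarrow> ('a set \<Rightarrow> ennreal) \<Rightarrow> 'a set \<Rightarrow> bool" where
  "negligible B \<tau> N \<longleftrightarrow> (\<exists>G\<in>B. N \<subseteq> G \<and> \<tau> G = 0)"

definition sigma_ideal :: "'a set set \<Rightarrow> 'a set set \<Rightarrow> bool" where
  "sigma_ideal B I \<longleftrightarrow>
     I \<noteq> {} \<and> I \<subseteq> B \<and>
     (\<forall>S::nat \<Rightarrow> 'a set. range S \<subseteq> I \<longrightarrow> (\<Union>n. S n) \<in> I) \<and>
     (\<forall>A\<in>B. \<forall>J\<in>I. A \<subseteq> J \<longrightarrow> A \<in> I)"

definition sigma_principal :: "'a set set \<Rightarrow> ('a set \<Rightarrow> ennreal) \<Rightarrow> bool" where
  "sigma_principal B \<tau> \<longleftrightarrow>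
     (\<forall>I. sigma_ideal B I \<longrightarrow> (\<exists>L\<in>I. \<forall>S\<in>I. negligible B \<tau> (S - L)))"

definition B_measurable :: "'a set \<Rightarrow> 'a set set \<Rightarrow> ('a \<Rightarrow> ennreal) \<Rightarrow> bool" where
  "B_measurable E B f \<longleftrightarrow> (\<forall>t::ennreal. {x\<in>E. f x > t} \<in> B)"

definition ess_sup :: "'a set set \<Rightarrow> ('a set \<Rightarrow> ennreal) \<Rightarrow> ('a \<Rightarrow> ennreal) \<Rightarrow> 'a set \<Rightarrow> ennreal" where
  "ess_sup B \<tau> f A = Inf {t::ennreal. t > 0 \<and> negligible B \<tau> (A \<inter> {x. f x > t})}"

definition abs_cont :: "'a set set \<Rightarrow> ('a set \<Rightarrow> ennreal) \<Rightarrow> ('a set \<Rightarrow> ennreal) \<Rightarrow> bool" where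
  "abs_cont B \<nu> \<tau> \<longleftrightarrow> (\<forall>A\<in>B. \<tau> A = 0 \<longrightarrow> \<nu> A = 0)"

definition is_rel_density :: "'a set \<Rightarrow> 'a set set \<Rightarrow> ('a set \<Rightarrow> ennreal) \<Rightarrow> ('a set \<Rightarrow> ennreal) \<Rightarrow> ('a \<Rightarrow> ennreal) \<Rightarrow> bool" where
  "is_rel_density E B \<nu> \<tau> f \<longleftrightarrow> B_measurable E B f \<and> (\<forall>A\<in>B. \<nu> A = ess_sup B \<tau> f A)"

definition strong_abs_cont :: "'a set \<Rightarrow> 'a set set \<Rightarrow> ('a set \<Rightarrow> ennreal) \<Rightarrow> ('a set \<Rightarrow> ennreal) \<Rightarrow> bool" where
  "strong_abs_cont E B \<nu> \<tau> \<longleftrightarrow> (\<exists>f. is_rel_density E B \<nu> \<tau> f)"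

end

theory Submission
  imports Defs
begin

lemma sm_mono:
  assumes "sigma_maxitive B \<nu>" "A \<in> B" "A' \<in> B" "A \<subseteq> A'"
  shows "\<nu> A \<le> \<nu> A'"
proof -
  have "\<nu> (A \<union> A') = max (\<nu> A) (\<nu> A')" using assms unfolding sigma_maxitive_def by blast
  moreover have "A \<union> A' = A'" using assms(4) by blast
  ultimately show ?thesis by (metis max.cobounded1)
qed

lemma sm_countable_bound:
  assumes sa: "sigma_algebra E B" and sm: "sigma_maxitive B \<nu>" and I: "countable I"
    and S: "\<And>i. i \<in> I \<Longrightarrow> S i \<in> B" and c: "\<And>i. i \<in> I \<Longrightarrow> \<nu> (S i) \<le> c"
  shows "\<nu> (\<Union>i\<in>I. S i) \<le> c"
proof (cases "I = {}")
  case True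
  then show ?thesis using sm unfolding sigma_maxitive_def by simp
next
  case False
  define T where "T n = S (from_nat_into I n)" for n
  have TB: "T n \<in> B" for n using S from_nat_into[OF False] T_def by auto
  have Tc: "\<nu> (T n) \<le> c" for n using c from_nat_into[OF False] T_def by auto
  have eq: "(\<Union>i\<in>I. S i) = (\<Union>n. T n)"
  proof -
    have "(\<Union>n. T n) = \<Union>(S ` range (from_nat_into I))" unfolding T_def by auto
    then show ?thesis using range_from_nat_into[OF False I] by simp
  qed
  define H where "H n = (\<Union>k\<le>n. T k)" for n
  have HB: "H n \<in> B" for n
    unfolding H_def using sigma_algebra.countable_UN''[OF sa, of "{..n}" T] TB by auto
  have mx: "\<forall>A\<in>B. \<forall>A'\<in>B. \<nu> (A \<union> A') = max (\<nu> A) (\<nu> A')"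
    using sm unfolding sigma_maxitive_def by blast
  have Hc: "\<nu> (H n) \<le> c" for n
  proof (induction n)
    case 0 then show ?case using Tc by (simp add: H_def)
  next
    case (Suc n)
    have "H (Suc n) = H n \<union> T (Suc n)" unfolding H_def by (auto simp: atMost_Suc)
    then have "\<nu> (H (Suc n)) = max (\<nu> (H n)) (\<nu> (T (Suc n)))"
      using mx HB TB by simp
    then show ?case using Suc Tc by simp
  qed
  have inc: "incseq H" unfolding H_def incseq_def by (auto 4 3 intro: order_trans)
  have "(\<lambda>n. \<nu> (H n)) \<longlonglongrightarrow> \<nu> (\<Union>n. H n)"
    using sm HB inc unfolding sigma_maxitive_def by blast
  then have "\<nu> (\<Union>n. H n) \<le> c" by (rule LIMSEQ_le_const2) (use Hc in auto)
  moreover have "(\<Union>n. H n) = (\<Union>n. T n)" unfolding H_def by auto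
  ultimately show ?thesis using eq by simp
qed

lemma negl_countable:
  assumes sa: "sigma_algebra E B" and sm: "sigma_maxitive B \<tau>" and I: "countable I"
    and N: "\<And>i. i \<in> I \<Longrightarrow> negligible B \<tau> (N i)"
  shows "negligible B \<tau> (\<Union>i\<in>I. N i)"
proof -
  have "\<forall>i\<in>I. \<exists>G. G \<in> B \<and> N i \<subseteq> G \<and> \<tau> G = 0" using N unfolding negligible_def by blast
  then obtain G where G: "\<And>i. i \<in> I \<Longrightarrow> G i \<in> B \<and> N i \<subseteq> G i \<and> \<tau> (G i) = 0" by metis
  have "\<tau> (\<Union>i\<in>I. G i) \<le> 0"
    by (rule sm_countable_bound[OF sa sm I]) (use G in auto)
  moreover have "(\<Union>i\<in>I. G i) \<in> B" using sigma_algebra.countable_UN''[OF sa I] G by blast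
  ultimately show ?thesis unfolding negligible_def using G by (intro bexI[of _ "\<Union>i\<in>I. G i"]) auto
qed

lemma negl_subset: "negligible B \<tau> N \<Longrightarrow> M \<subseteq> N \<Longrightarrow> negligible B \<tau> M"
  unfolding negligible_def by blast

definition QQ :: "ennreal set" where "QQ = range (\<lambda>r::rat. ennreal (real_of_rat r))"

lemma QQ_countable: "countable QQ" unfolding QQ_def by simp

lemma QQ_dense: "(x::ennreal) < y \<Longrightarrow> \<exists>q\<in>QQ. x < q \<and> q < y"
  using ennreal_rat_dense[of x y] unfolding QQ_def by blast

lemma le_by_QQ: "(\<And>q. q \<in> QQ \<Longrightarrow> y < q \<Longrightarrow> x \<le> q) \<Longrightarrow> (x::ennreal) \<le> y"
  by (metis QQ_dense leD not_le_imp_less)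

lemma sa_empty: "sigma_algebra E B \<Longrightarrow> {} \<in> B"
proof - assume "sigma_algebra E B" then interpret sigma_algebra E B . show ?thesis by simp qed

lemma sa_diff: "sigma_algebra E B \<Longrightarrow> A \<in> B \<Longrightarrow> C \<in> B \<Longrightarrow> A - C \<in> B"
proof - assume "sigma_algebra E B" "A \<in> B" "C \<in> B" then interpret sigma_algebra E B by simp
  show ?thesis using \<open>A \<in> B\<close> \<open>C \<in> B\<close> by auto qed

lemma sa_top: "sigma_algebra E B \<Longrightarrow> E \<in> B"
proof - assume "sigma_algebra E B" then interpret sigma_algebra E B . show ?thesis by simp qed

lemma sub_E: "sigma_algebra E B \<Longrightarrow> A \<in> B \<Longrightarrow> A \<subseteq> E"
proof - assume "sigma_algebra E B" "A \<in> B" then interpret sigma_algebra E B by simp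
  show ?thesis using \<open>A \<in> B\<close> sets_into_space by auto qed

lemma negl_empty: "sigma_algebra E B \<Longrightarrow> sigma_maxitive B \<tau> \<Longrightarrow> negligible B \<tau> {}"
  unfolding negligible_def sigma_maxitive_def using sa_empty by blast

lemma unique_piece:
  assumes sa: "sigma_algebra E B" and smt: "sigma_maxitive B \<tau>"
    and f: "is_rel_density E B \<nu> \<tau> f" and g: "is_rel_density E B \<nu> \<tau> g"
    and p: "p \<in> QQ" and q: "q \<in> QQ" and pq: "p < q"
  shows "negligible B \<tau> {x\<in>E. g x \<le> p \<and> q < f x}"
proof (rule ccontr)
  assume nn: "\<not> negligible B \<tau> {x\<in>E. g x \<le> p \<and> q < f x}"
  define A where "A = {x\<in>E. g x \<le> p \<and> q < f x}"
  have "A = {x\<in>E. q < f x} - {x\<in>E. p < g x}" unfolding A_def by (auto simp: not_less)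
  moreover have "{x\<in>E. q < f x} \<in> B" "{x\<in>E. p < g x} \<in> B"
    using f g unfolding is_rel_density_def B_measurable_def by auto
  ultimately have AB: "A \<in> B" using sa_diff[OF sa] by simp
  obtain t where t: "t \<in> QQ" "p < t" "t < q" using QQ_dense[OF pq] by blast
  have t0: "t > 0" using t(2) by (rule le_less_trans[OF zero_le])
  have "A \<inter> {x. g x > t} = {}" unfolding A_def using t(2) by auto
  then have "negligible B \<tau> (A \<inter> {x. g x > t})" using negl_empty[OF sa smt] by simp
  then have "ess_sup B \<tau> g A \<le> t" unfolding ess_sup_def using t0 by (intro Inf_lower) auto
  moreover have "ess_sup B \<tau> f A \<ge> q" unfolding ess_sup_def
  proof (rule Inf_greatest)
    fix s assume s: "s \<in> {t. 0 < t \<and> negligible B \<tau> (A \<inter> {x. t < f x})}"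
    show "q \<le> s"
    proof (rule ccontr)
      assume "\<not> q \<le> s"
      then have "A \<inter> {x. s < f x} = A" unfolding A_def by (auto simp: not_le)
      then show False using s nn A_def by simp
    qed
  qed
  moreover have "\<nu> A = ess_sup B \<tau> g A" "\<nu> A = ess_sup B \<tau> f A"
    using f g AB unfolding is_rel_density_def by auto
  ultimately show False using t(3) by simp
qed

lemma uniqueness:
  assumes sa: "sigma_algebra E B" and smt: "sigma_maxitive B \<tau>"
    and f: "is_rel_density E B \<nu> \<tau> f" and g: "is_rel_density E B \<nu> \<tau> g"
  shows "negligible B \<tau> {x\<in>E. f x \<noteq> g x}"
proof -
  define N where "N pq = {x\<in>E. g x \<le> fst pq \<and> snd pq < f x} \<union> {x\<in>E. f x \<le> fst pq \<and> snd pq < g x}" for pq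
  define P where "P = {pq \<in> QQ \<times> QQ. fst pq < snd pq}"
  have "countable P"
    by (rule countable_subset[of P "QQ \<times> QQ"]) (auto simp: P_def QQ_countable)
  moreover have "negligible B \<tau> (N pq)" if "pq \<in> P" for pq
  proof -
    have "negligible B \<tau> (\<Union>i\<in>{0::nat,1}. (if i = 0 then {x\<in>E. g x \<le> fst pq \<and> snd pq < f x}
        else {x\<in>E. f x \<le> fst pq \<and> snd pq < g x}))"
      using that unfolding P_def
      by (intro negl_countable[OF sa smt]) (auto intro: unique_piece[OF sa smt f g] unique_piece[OF sa smt g f])
    moreover have "N pq \<subseteq> (\<Union>i\<in>{0::nat,1}. (if i = 0 then {x\<in>E. g x \<le> fst pq \<and> snd pq < f x}
        else {x\<in>E. f x \<le> fst pq \<and> snd pq < g x}))" unfolding N_def by auto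
    ultimately show ?thesis by (rule negl_subset)
  qed
  ultimately have "negligible B \<tau> (\<Union>pq\<in>P. N pq)" by (rule negl_countable[OF sa smt])
  moreover have "{x\<in>E. f x \<noteq> g x} \<subseteq> (\<Union>pq\<in>P. N pq)"
  proof
    fix x assume x: "x \<in> {x\<in>E. f x \<noteq> g x}"
    show "x \<in> (\<Union>pq\<in>P. N pq)"
    proof (cases "f x < g x")
      case True
      obtain p where p: "p \<in> QQ" "f x < p" "p < g x" using QQ_dense[OF True] by blast
      obtain q where q: "q \<in> QQ" "p < q" "q < g x" using QQ_dense[OF p(3)] by blast
      have "x \<in> N (p, q)" unfolding N_def using x p q by auto
      moreover have "(p, q) \<in> P" unfolding P_def using p q by auto
      ultimately show ?thesis by blast
    next
      case False
      then have fg: "g x < f x" using x by auto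
      obtain p where p: "p \<in> QQ" "g x < p" "p < f x" using QQ_dense[OF fg] by blast
      obtain q where q: "q \<in> QQ" "p < q" "q < f x" using QQ_dense[OF p(3)] by blast
      have "x \<in> N (p, q)" unfolding N_def using x p q by auto
      moreover have "(p, q) \<in> P" unfolding P_def using p q by auto
      ultimately show ?thesis by blast
    qed
  qed
  ultimately show ?thesis by (rule negl_subset)
qed

lemma easy_dir:
  assumes sa: "sigma_algebra E B" and s: "strong_abs_cont E B \<nu> \<tau>"
  shows "abs_cont B \<nu> \<tau>"
  unfolding abs_cont_def
proof (intro ballI impI)
  fix A assume A: "A \<in> B" "\<tau> A = 0"
  obtain f where f: "is_rel_density E B \<nu> \<tau> f" using s unfolding strong_abs_cont_def by blast
  have "ess_sup B \<tau> f A \<le> 0"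
  proof (rule le_by_QQ)
    fix q :: ennreal assume "q \<in> QQ" "0 < q"
    moreover have "negligible B \<tau> (A \<inter> {x. q < f x})" unfolding negligible_def using A by blast
    ultimately show "ess_sup B \<tau> f A \<le> q" unfolding ess_sup_def by (intro Inf_lower) auto
  qed
  then show "\<nu> A = 0" using f A unfolding is_rel_density_def by auto
qed

lemma hard_dir:
  assumes sa: "sigma_algebra E B" and smn: "sigma_maxitive B \<nu>" and smt: "sigma_maxitive B \<tau>"
    and pr: "sigma_principal B \<tau>" and ac: "abs_cont B \<nu> \<tau>"
  shows "strong_abs_cont E B \<nu> \<tau>"
proof -
  have Lex: "\<exists>L. L \<in> B \<and> \<nu> L \<le> c \<and> (\<forall>S\<in>B. \<nu> S \<le> c \<longrightarrow> negligible B \<tau> (S - L))" for c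
  proof -
    define I where "I = {A\<in>B. \<nu> A \<le> c}"
    have "{} \<in> I" unfolding I_def using sa_empty[OF sa] smn unfolding sigma_maxitive_def by simp
    moreover have "(\<Union>n. S n) \<in> I" if "range S \<subseteq> I" for S :: "nat \<Rightarrow> 'a set"
    proof -
      have "\<nu> (\<Union>n\<in>UNIV. S n) \<le> c" using that unfolding I_def
        by (intro sm_countable_bound[OF sa smn]) auto
      moreover have "(\<Union>n. S n) \<in> B" using that sigma_algebra.countable_UN''[OF sa, of UNIV S]
        unfolding I_def by auto
      ultimately show ?thesis unfolding I_def by simp
    qed
    moreover have "A \<in> I" if "A \<in> B" "J \<in> I" "A \<subseteq> J" for A J
      using that sm_mono[OF smn, of A J] unfolding I_def by auto
    ultimately have "sigma_ideal B I" unfolding sigma_ideal_def I_def by blast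
    then obtain L where "L \<in> I" "\<forall>S\<in>I. negligible B \<tau> (S - L)"
      using pr unfolding sigma_principal_def by blast
    then show ?thesis unfolding I_def by auto
  qed
  then obtain L where LB: "\<And>c. L c \<in> B" and Lc: "\<And>c. \<nu> (L c) \<le> c"
    and LS: "\<And>c S. S \<in> B \<Longrightarrow> \<nu> S \<le> c \<Longrightarrow> negligible B \<tau> (S - L c)"
    by metis
  define f where "f x = Inf {q\<in>QQ. x \<in> L q}" for x
  have fle: "f x \<le> q" if "q \<in> QQ" "x \<in> L q" for x q
    unfolding f_def using that by (intro Inf_lower) auto
  have flt: "\<exists>s\<in>QQ. s < q \<and> x \<in> L s" if "f x < q" for x q
    using that unfolding f_def by (auto simp: Inf_less_iff)
  define U where "U q = (\<Union>s\<in>{s\<in>QQ. s < q}. L s)" for q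
  have UB: "U q \<in> B" for q unfolding U_def
    by (rule sigma_algebra.countable_UN''[OF sa]) (auto intro: countable_subset[OF _ QQ_countable] LB)
  have Uc: "\<nu> (U q) \<le> q" for q unfolding U_def
  proof (rule sm_countable_bound[OF sa smn])
    show "countable {s \<in> QQ. s < q}" by (rule countable_subset[OF _ QQ_countable]) auto
    show "L i \<in> B" for i by (rule LB)
    show "\<nu> (L i) \<le> q" if "i \<in> {s \<in> QQ. s < q}" for i using Lc[of i] that by auto
  qed
  have meas: "B_measurable E B f" unfolding B_measurable_def
  proof
    fix t :: ennreal
    have eq: "{x\<in>E. t < f x} = (\<Union>q\<in>{q\<in>QQ. t < q}. E - U q)"
    proof (intro equalityI subsetI)
      fix x assume x: "x \<in> {x\<in>E. t < f x}"
      then obtain q where q: "q \<in> QQ" "t < q" "q < f x" using QQ_dense by blast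
      have "x \<notin> U q"
      proof
        assume "x \<in> U q"
        then obtain s where "s \<in> QQ" "s < q" "x \<in> L s" unfolding U_def by auto
        then have "f x \<le> s" using fle by blast
        then show False using q \<open>s < q\<close> by simp
      qed
      then show "x \<in> (\<Union>q\<in>{q\<in>QQ. t < q}. E - U q)" using x q by blast
    next
      fix x assume x: "x \<in> (\<Union>q\<in>{q\<in>QQ. t < q}. E - U q)"
      then obtain q where q: "q \<in> QQ" "t < q" "x \<in> E" "x \<notin> U q" by blast
      have "t < f x"
      proof (rule ccontr)
        assume "\<not> t < f x"
        then have "f x < q" using q(2) by (simp add: not_less le_less_trans)
        then obtain s where "s \<in> QQ" "s < q" "x \<in> L s" using flt by blast
        then show False using q(4) unfolding U_def by blast
      qed
      then show "x \<in> {x\<in>E. t < f x}" using q by simp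
    qed
    show "{x\<in>E. t < f x} \<in> B" unfolding eq
      by (rule sigma_algebra.countable_UN''[OF sa])
         (auto intro: countable_subset[OF _ QQ_countable] sa_diff[OF sa] sa_top[OF sa] UB)
  qed
  have dens: "\<nu> A = ess_sup B \<tau> f A" if A: "A \<in> B" for A
  proof (rule antisym)
    show "\<nu> A \<le> ess_sup B \<tau> f A" unfolding ess_sup_def
    proof (rule Inf_greatest)
      fix t assume t: "t \<in> {t. 0 < t \<and> negligible B \<tau> (A \<inter> {x. t < f x})}"
      then obtain G where G: "G \<in> B" "A \<inter> {x. t < f x} \<subseteq> G" "\<tau> G = 0"
        unfolding negligible_def by blast
      have AG: "A \<inter> G \<in> B" using sa_diff[OF sa A sa_diff[OF sa A G(1)]] by (simp add: Diff_Diff_Int)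
      have "\<tau> (A \<inter> G) \<le> \<tau> G" using sm_mono[OF smt AG G(1)] by auto
      then have "\<nu> (A \<inter> G) = 0" using ac AG G(3) unfolding abs_cont_def by auto
      have ADG: "A - G \<in> B" using sa_diff[OF sa A G(1)] .
      have "\<nu> (A - G) \<le> t"
      proof (rule le_by_QQ)
        fix q assume q: "q \<in> QQ" "t < q"
        have "A - G \<subseteq> U q"
        proof
          fix x assume x: "x \<in> A - G"
          then have "f x \<le> t" using G(2) by (auto simp: not_less)
          then have "f x < q" using q(2) by (rule le_less_trans)
          then show "x \<in> U q" using flt unfolding U_def by blast
        qed
        then have "\<nu> (A - G) \<le> \<nu> (U q)" using sm_mono[OF smn ADG UB] by blast
        then show "\<nu> (A - G) \<le> q" using Uc order_trans by blast
      qed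
      have "A = (A \<inter> G) \<union> (A - G)" by blast
      then have "\<nu> A = max (\<nu> (A \<inter> G)) (\<nu> (A - G))"
        using smn AG ADG unfolding sigma_maxitive_def by metis
      then show "\<nu> A \<le> t" using \<open>\<nu> (A \<inter> G) = 0\<close> \<open>\<nu> (A - G) \<le> t\<close> by simp
    qed
  next
    show "ess_sup B \<tau> f A \<le> \<nu> A"
    proof (rule le_by_QQ)
      fix q assume q: "q \<in> QQ" "\<nu> A < q"
      have "negligible B \<tau> (A - L q)" using LS[OF A] q(2) by simp
      moreover have "A \<inter> {x. q < f x} \<subseteq> A - L q" using fle[OF q(1)] by (auto dest: leD)
      ultimately have "negligible B \<tau> (A \<inter> {x. q < f x})" by (rule negl_subset)
      moreover have "0 < q" using q(2) by (rule le_less_trans[OF zero_le])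
      ultimately show "ess_sup B \<tau> f A \<le> q" unfolding ess_sup_def by (intro Inf_lower) auto
    qed
  qed
  show ?thesis unfolding strong_abs_cont_def is_rel_density_def using meas dens by blast
qed

theorem corollary5p6:
  fixes E :: "'a set" and B :: "'a set set" and \<nu> \<tau> :: "'a set \<Rightarrow> ennreal"
  assumes "E \<noteq> {}" and "sigma_algebra E B"
    and "sigma_maxitive B \<nu>" and "sigma_maxitive B \<tau>"
    and "sigma_principal B \<tau>"
  shows "(abs_cont B \<nu> \<tau> \<longleftrightarrow> strong_abs_cont E B \<nu> \<tau>) \<and>
         (\<forall>f g. is_rel_density E B \<nu> \<tau> f \<longrightarrow> is_rel_density E B \<nu> \<tau> g \<longrightarrow>
                negligible B \<tau> {x\<in>E. f x \<noteq> g x})"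
  using easy_dir[OF assms(2)] hard_dir[OF assms(2-5)] uniqueness[OF assms(2,4)] by blast

end
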